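(* Let $k>0$, $a\in(0,1)$, $d>0$, assume $g$ satisfies (Hg) and that (Hd) holds. Define $\phi:\mathbb R^2\to\mathbb R^2$ by $$\phi(u,v)=\Big(\frac{k+1}{k}u-\frac1k v-\frac{g(u;a)}{kd},\ u\Big).$$ Then there exist horizontal strips $U_0,U_1$ with $U_0\cap U_1=\emptyset$ and vertical strips $V_0,V_1$ with $V_0\cap V_1=\emptyset$, all contained in $[0,1]^2$, such that for $n\in\{0,1\}$: $\phi(V_n)=U_n$, $\phi$ maps the vertical boundaries of $V_n$ onto the vertical boundaries of $U_n$, and maps the horizontal boundaries of $V_n$ onto the horizontal boundaries of $U_n$.
   Context: A function $g:\mathbb R\times[0,1]\to\mathbb R$, $(u,a)\mapsto g(u;a)$, satisfies (Hg) if it is $C^1$ and for every $a\in(0,1)$: $g(0;a)=g(a;a)=g(1;a)=0$, $g'(0;a)<0$, $g'(1;a)<0$, $g'(a;a)>0$ (where $g'=\partial_u g$), $g(v;a)>0$ for $v\in(-\infty,0)\cup(a,1)$ and $g(v;a)<0$ for $v\in(0,a)\cup(1,\infty)$. Let $h(v;a,d)=(k+1)v-\frac1d g(v;a)$. Condition (Hd): there exist $y_0\in(0,a)$ and $y_1\in(a,1)$ with $h(y_0;a,d)>k+1$, $h(y_1;a,d)<0$, and $\partial_v h(v;a,d)>0$ for $v\in(0,y_0)\cup(y_1,1)$. A horizontal curve is the graph $v=v(u)$ of a continuous function on $[0,1]$ with $0\le v(u)\le1$; a vertical curve is the graph $u=u(v)$ of a continuous function on $[0,1]$ with $0\le u(v)\le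 1$. A horizontal strip is $U=\{(u,v):0\le u\le1,\ v_1(u)\le v\le v_2(u)\}$ for horizontal curves $0\le v_1(u)<v_2(u)\le1$; its horizontal boundaries are the graphs of $v_1,v_2$ and its vertical boundaries are $U\cap\{u=0\}$ and $U\cap\{u=1\}$. A vertical strip is $V=\{(u,v):0\le v\le1,\ u_1(v)\le u\le u_2(v)\}$ for vertical curves $0\le u_1(v)<u_2(v)\le1$; its vertical boundaries are the graphs of $u_1,u_2$ and its horizontal boundaries are $V\cap\{v=0\}$ and $V\cap\{v=1\}$. *)

theory Defs
  imports "HOL-Analysis.Analysis"
begin

definition C1_on :: "'a::real_normed_vector set \<Rightarrow> ('a \<Rightarrow> 'b::real_normed_vector) \<Rightarrow> bool" where
  "C1_on S f \<longleftrightarrow> (\<exists>f'. (\<forall>x\<in>S. (f has_derivative blinfun_apply (f' x)) (at x within S))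
                      \<and> continuous_on S f')"

definition Hg :: "(real \<Rightarrow> real \<Rightarrow> real) \<Rightarrow> bool" where
  "Hg g \<longleftrightarrow> C1_on (UNIV \<times> {0..1}) (\<lambda>(u, a). g u a) \<and>
     (\<forall>a\<in>{0<..<1}.
        g 0 a = 0 \<and> g a a = 0 \<and> g 1 a = 0 \<and>
        deriv (\<lambda>u. g u a) 0 < 0 \<and> deriv (\<lambda>u. g u a) 1 < 0 \<and> deriv (\<lambda>u. g u a) a > 0 \<and>
        (\<forall>v. (v < 0 \<or> (a < v \<and> v < 1)) \<longrightarrow> g v a > 0) \<and>
        (\<forall>v. ((0 < v \<and> v < a) \<or> 1 < v) \<longrightarrow> g v a < 0))"

definition hfun :: "real \<Rightarrow> (real \<Rightarrow> real \<Rightarrow> real) \<Rightarrow> real \<Rightarrow> real \<Rightarrow> real \<Rightarrow> real" where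
  "hfun k g v a d = (k + 1) * v - (1 / d) * g v a"

definition Hd :: "real \<Rightarrow> (real \<Rightarrow> real \<Rightarrow> real) \<Rightarrow> real \<Rightarrow> real \<Rightarrow> bool" where
  "Hd k g a d \<longleftrightarrow> (\<exists>y0\<in>{0<..<a}. \<exists>y1\<in>{a<..<1}.
      hfun k g y0 a d > k + 1 \<and> hfun k g y1 a d < 0 \<and>
      (\<forall>v\<in>{0<..<y0} \<union> {y1<..<1}. deriv (\<lambda>w. hfun k g w a d) v > 0))"

definition phi :: "real \<Rightarrow> real \<Rightarrow> real \<Rightarrow> (real \<Rightarrow> real \<Rightarrow> real) \<Rightarrow> real \<times> real \<Rightarrow> real \<times> real" where
  "phi k a d g = (\<lambda>(u, v). ((k + 1) / k * u - (1 / k) * v - g u a / (k * d), u))"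

text \<open>A curve (horizontal v = c(u) or vertical u = c(v)): continuous on [0,1] with values in [0,1].\<close>
definition unit_curve :: "(real \<Rightarrow> real) \<Rightarrow> bool" where
  "unit_curve c \<longleftrightarrow> continuous_on {0..1} c \<and> (\<forall>t\<in>{0..1}. 0 \<le> c t \<and> c t \<le> 1)"

definition strip_bounds :: "(real \<Rightarrow> real) \<Rightarrow> (real \<Rightarrow> real) \<Rightarrow> bool" where
  "strip_bounds c1 c2 \<longleftrightarrow> unit_curve c1 \<and> unit_curve c2 \<and> (\<forall>t\<in>{0..1}. c1 t < c2 t)"

definition hstrip :: "(real \<Rightarrow> real) \<Rightarrow> (real \<Rightarrow> real) \<Rightarrow> (real \<times> real) set" where
  "hstrip v1 v2 = {(u, v). 0 \<le> u \<and> u \<le> 1 \<and> v1 u \<le> v \<and> v \<le> v2 u}"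

definition hstrip_hbdry :: "(real \<Rightarrow> real) \<Rightarrow> (real \<Rightarrow> real) \<Rightarrow> (real \<times> real) set" where
  "hstrip_hbdry v1 v2 = {(u, v1 u) | u. 0 \<le> u \<and> u \<le> 1} \<union> {(u, v2 u) | u. 0 \<le> u \<and> u \<le> 1}"

definition hstrip_vbdry :: "(real \<Rightarrow> real) \<Rightarrow> (real \<Rightarrow> real) \<Rightarrow> (real \<times> real) set" where
  "hstrip_vbdry v1 v2 = (hstrip v1 v2 \<inter> {p. fst p = 0}) \<union> (hstrip v1 v2 \<inter> {p. fst p = 1})"

definition vstrip :: "(real \<Rightarrow> real) \<Rightarrow> (real \<Rightarrow> real) \<Rightarrow> (real \<times> real) set" where
  "vstrip u1 u2 = {(u, v). 0 \<le> v \<and> v \<le> 1 \<and> u1 v \<le> u \<and> u \<le> u2 v}"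

definition vstrip_vbdry :: "(real \<Rightarrow> real) \<Rightarrow> (real \<Rightarrow> real) \<Rightarrow> (real \<times> real) set" where
  "vstrip_vbdry u1 u2 = {(u1 v, v) | v. 0 \<le> v \<and> v \<le> 1} \<union> {(u2 v, v) | v. 0 \<le> v \<and> v \<le> 1}"

definition vstrip_hbdry :: "(real \<Rightarrow> real) \<Rightarrow> (real \<Rightarrow> real) \<Rightarrow> (real \<times> real) set" where
  "vstrip_hbdry u1 u2 = (vstrip u1 u2 \<inter> {p. snd p = 0}) \<union> (vstrip u1 u2 \<inter> {p. snd p = 1})"

end

theory Submission
  imports Defs
begin

lemma g_diff:
  assumes "Hg g" "0 < a" "a < 1"
  shows "(\<lambda>u. g u a) differentiable (at v)"
proof -
  from assms(1) obtain f' where f': "\<forall>x\<in>UNIV \<times> {0..1}. ((\<lambda>(u, a). g u a) has_derivative blinfun_apply (f' x)) (at x within UNIV \<times> {0..1})"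
    unfolding Hg_def C1_on_def by blast
  have mem: "(v, a) \<in> UNIV \<times> {0..(1::real)}" using assms by auto
  have int: "(v, a) \<in> interior (UNIV \<times> {0..(1::real)})"
    using assms by (simp add: interior_Times)
  have d1: "((\<lambda>(u, a). g u a) has_derivative blinfun_apply (f' (v,a))) (at (v,a))"
    using f' mem at_within_interior[OF int] by metis
  have d2: "((\<lambda>u. (u, a)) has_derivative (\<lambda>h. (h, 0))) (at v)"
    by (auto intro!: derivative_eq_intros)
  have "((\<lambda>u. (\<lambda>(u, a). g u a) (u, a)) has_derivative (\<lambda>h. blinfun_apply (f' (v,a)) (h, 0))) (at v)"
    using has_derivative_compose[OF d2 d1] by simp
  then show ?thesis unfolding differentiable_def by auto
qed

lemma h_deriv:
  assumes "Hg g" "0 < a" "a < 1"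
  shows "DERIV (\<lambda>w. hfun k g w a d) v :> deriv (\<lambda>w. hfun k g w a d) v"
proof -
  have "(\<lambda>w. hfun k g w a d) differentiable (at v)"
    unfolding hfun_def using g_diff[OF assms, of v]
    by (intro differentiable_diff differentiable_mult differentiable_const differentiable_ident) auto
  then show ?thesis using DERIV_deriv_iff_real_differentiable by blast
qed

lemma h_cont:
  assumes "Hg g" "0 < a" "a < 1"
  shows "continuous_on S (\<lambda>w. hfun k g w a d)"
  using h_deriv[OF assms] by (meson DERIV_isCont continuous_at_imp_continuous_on)

lemma branch:
  fixes h :: "real \<Rightarrow> real" and k c e :: real
  assumes k: "k > 0" and c0: "0 \<le> c" and ce: "c < e" and e1: "e \<le> 1"
    and hc: "continuous_on {c..e} h"
    and hm: "\<And>x y. c \<le> x \<Longrightarrow> x < y \<Longrightarrow> y \<le> e \<Longrightarrow> h x < h y"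
    and hlo: "h c \<le> 0" and hhi: "h e \<ge> k + 1"
  shows "\<exists>p q r s. strip_bounds p q \<and> strip_bounds r s \<and>
     hstrip p q \<subseteq> {0..1} \<times> {c..e} \<and> vstrip r s \<subseteq> {c..e} \<times> {0..1} \<and>
     (\<lambda>(u, v). ((h u - v) / k, u)) ` vstrip r s = hstrip p q \<and>
     (\<lambda>(u, v). ((h u - v) / k, u)) ` vstrip_vbdry r s = hstrip_vbdry p q \<and>
     (\<lambda>(u, v). ((h u - v) / k, u)) ` vstrip_hbdry r s = hstrip_hbdry p q"
proof -
  define inv where "inv = the_inv_into {c..e} h"
  have hmle: "h x \<le> h y" if "c \<le> x" "x \<le> y" "y \<le> e" for x y
    using hm[of x y] that by (cases "x = y") auto
  have inj: "inj_on h {c..e}"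
    by (rule linorder_inj_onI) (use hm in force)+
  have img: "h ` {c..e} = {h c..h e}"
  proof
    show "h ` {c..e} \<subseteq> {h c..h e}" using hmle by auto
    show "{h c..h e} \<subseteq> h ` {c..e}"
    proof
      fix t assume "t \<in> {h c..h e}"
      then obtain x where "c \<le> x" "x \<le> e" "h x = t" using IVT'[of h c t e] hc ce by auto
      then show "t \<in> h ` {c..e}" by auto
    qed
  qed
  have I1: "inv t \<in> {c..e} \<and> h (inv t) = t" if "h c \<le> t" "t \<le> h e" for t
    using that img inj unfolding inv_def
    by (metis atLeastAtMost_iff f_the_inv_into_f the_inv_into_into order_refl)
  have I2: "inv (h u) = u" if "c \<le> u" "u \<le> e" for u
    using that inj unfolding inv_def by (simp add: the_inv_into_f_f)
  have I3: "continuous_on {h c..h e} inv"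
    using continuous_on_inv_into[OF hc compact_Icc inj] img unfolding inv_def by simp
  have Imono: "inv s < inv t" if "h c \<le> s" "s < t" "t \<le> h e" for s t
  proof (rule ccontr)
    assume "\<not> inv s < inv t"
    then have "h (inv t) \<le> h (inv s)" using I1[of s] I1[of t] that hmle[of "inv t" "inv s"] by auto
    then show False using I1[of s] I1[of t] that by auto
  qed
  have char: "(inv t1 \<le> u \<and> u \<le> inv t2) \<longleftrightarrow> (c \<le> u \<and> u \<le> e \<and> t1 \<le> h u \<and> h u \<le> t2)"
    if "h c \<le> t1" "t1 \<le> t2" "t2 \<le> h e" for t1 t2 u
  proof
    assume a: "inv t1 \<le> u \<and> u \<le> inv t2"
    have b: "c \<le> u \<and> u \<le> e" using a I1[of t1] I1[of t2] that by auto
    have "h (inv t1) \<le> h u" "h u \<le> h (inv t2)" using a b I1[of t1] I1[of t2] that hmle[of "inv t1" u] hmle[of u "inv t2"] by auto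
    then show "c \<le> u \<and> u \<le> e \<and> t1 \<le> h u \<and> h u \<le> t2" using b I1[of t1] I1[of t2] that by auto
  next
    assume a: "c \<le> u \<and> u \<le> e \<and> t1 \<le> h u \<and> h u \<le> t2"
    have "h c \<le> h u" "h u \<le> h e" using a hmle by auto
    have hu: "h c \<le> h u" "h u \<le> h e" by fact+
    have "inv t1 \<le> inv (h u)"
    proof (cases "t1 = h u")
      case False then show ?thesis using Imono[of t1 "h u"] a that hu by linarith
    qed simp
    moreover have "inv (h u) \<le> inv t2"
    proof (cases "t2 = h u")
      case False then show ?thesis using Imono[of "h u" t2] a that hu by linarith
    qed simp
    ultimately
    show "inv t1 \<le> u \<and> u \<le> inv t2" using I2 a by auto
  qed
  define p where "p = (\<lambda>x. inv (k * x))"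
  define q where "q = (\<lambda>x. inv (k * x + 1))"
  define r where "r = (\<lambda>v. inv v)"
  define s where "s = (\<lambda>v. inv (v + k))"
  define F where "F = (\<lambda>(u::real, v::real). ((h u - v) / k, u))"
  have rng: "h c \<le> t \<and> t \<le> h e" if "0 \<le> t" "t \<le> k + 1" for t using that hlo hhi by auto
  have hU: "(x, y) \<in> hstrip p q \<longleftrightarrow> 0 \<le> x \<and> x \<le> 1 \<and> c \<le> y \<and> y \<le> e \<and> k * x \<le> h y \<and> h y \<le> k * x + 1"
    for x y
  proof (cases "0 \<le> x \<and> x \<le> 1")
    case True
    have "0 \<le> k * x" "k * x + 1 \<le> k + 1" using True k by (auto simp: mult_left_le)
    then show ?thesis using char[of "k*x" "k*x+1" y] rng[of "k*x"] rng[of "k*x+1"] True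
      unfolding hstrip_def p_def q_def by auto
  qed (auto simp: hstrip_def)
  have hV: "(u, v) \<in> vstrip r s \<longleftrightarrow> 0 \<le> v \<and> v \<le> 1 \<and> c \<le> u \<and> u \<le> e \<and> v \<le> h u \<and> h u \<le> v + k"
    for u v
  proof (cases "0 \<le> v \<and> v \<le> 1")
    case True
    then show ?thesis using char[of v "v+k" u] rng[of v] rng[of "v+k"] True k
      unfolding vstrip_def r_def s_def by auto
  qed (auto simp: vstrip_def)
  have cont: "continuous_on {0..1} (\<lambda>x. inv (m * x + b))" if "0 \<le> b" "m \<ge> 0" "m + b \<le> k + 1" for m b
  proof (rule continuous_on_compose2[OF I3])
    show "continuous_on {0..1} (\<lambda>x. m * x + b)" by (intro continuous_intros)
    show "(\<lambda>x. m * x + b) ` {0..1} \<subseteq> {h c..h e}"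
    proof
      fix y assume "y \<in> (\<lambda>x. m * x + b) ` {0..(1::real)}"
      then obtain x where x: "0 \<le> x" "x \<le> 1" "y = m * x + b" by auto
      have "m * x \<le> m" using x that by (simp add: mult_left_le)
      then show "y \<in> {h c..h e}" using rng[of y] x that by auto
    qed
  qed
  have ub: "0 \<le> inv t \<and> inv t \<le> 1" if "0 \<le> t" "t \<le> k + 1" for t
    using I1[of t] rng[OF that] c0 e1 by auto
  have "strip_bounds p q"
    unfolding strip_bounds_def unit_curve_def
  proof (intro conjI ballI)
    show "continuous_on {0..1} p" using cont[of 0 k] k unfolding p_def by simp
    show "continuous_on {0..1} q" using cont[of 1 k] k unfolding q_def by simp
  next
    fix t :: real assume t: "t \<in> {0..1}"
    have t1: "0 \<le> k * t" "k * t + 1 \<le> k + 1" using t k by (auto simp: mult_left_le)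
    show "0 \<le> p t" "p t \<le> 1" "0 \<le> q t" "q t \<le> 1" using ub t1 unfolding p_def q_def by auto
    show "p t < q t" using Imono[of "k*t" "k*t+1"] rng t1 unfolding p_def q_def by auto
  qed
  moreover have "strip_bounds r s"
    unfolding strip_bounds_def unit_curve_def
  proof (intro conjI ballI)
    show "continuous_on {0..1} r" using cont[of 0 1] k unfolding r_def by simp
    show "continuous_on {0..1} s" using cont[of k 1] k unfolding s_def by (simp add: add.commute)
  next
    fix t :: real assume t: "t \<in> {0..1}"
    show "0 \<le> r t" "r t \<le> 1" "0 \<le> s t" "s t \<le> 1" using ub t k unfolding r_def s_def by auto
    show "r t < s t" using Imono[of "t" "t+k"] rng t k unfolding r_def s_def by auto
  qed
  moreover have "hstrip p q \<subseteq> {0..1} \<times> {c..e}" using hU by auto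
  moreover have "vstrip r s \<subseteq> {c..e} \<times> {0..1}" using hV by auto
  moreover have "F ` vstrip r s = hstrip p q"
  proof -
    have X: "F (u, v) \<in> hstrip p q" if "(u, v) \<in> vstrip r s" for u v
    proof -
      have V: "0 \<le> v \<and> v \<le> 1 \<and> c \<le> u \<and> u \<le> e \<and> v \<le> h u \<and> h u \<le> v + k" using hV that by blast
      have kx: "k * ((h u - v) / k) = h u - v" using k by simp
      have "0 \<le> (h u - v) / k" "(h u - v) / k \<le> 1" using V k by (auto simp: field_simps)
      then show ?thesis unfolding F_def using hU V kx by simp
    qed
    have Y: "(x, y) \<in> F ` vstrip r s" if "(x, y) \<in> hstrip p q" for x y
    proof -
      have U: "0 \<le> x \<and> x \<le> 1 \<and> c \<le> y \<and> y \<le> e \<and> k * x \<le> h y \<and> h y \<le> k * x + 1" using hU that by blast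
      have "k * x \<le> k" "0 \<le> k * x" using U k by (simp_all add: mult_left_le)
      then have "(y, h y - k * x) \<in> vstrip r s" using hV U by auto
      moreover have "F (y, h y - k * x) = (x, y)" unfolding F_def using k by simp
      ultimately show ?thesis by (metis image_eqI)
    qed
    show ?thesis
    proof (rule subset_antisym)
      show "F ` vstrip r s \<subseteq> hstrip p q" using X by (auto simp: image_subset_iff)
      show "hstrip p q \<subseteq> F ` vstrip r s" using Y by auto
    qed
  qed
  moreover have "F ` vstrip_vbdry r s = hstrip_vbdry p q"
  proof -
    have XA: "F (r v, v) \<in> hstrip p q \<inter> {p. fst p = 0}" if v: "0 \<le> v" "v \<le> 1" for v
    proof -
      have "F (r v, v) = (0, inv v)" using I1[of v] rng[of v] v k unfolding F_def r_def by auto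
      moreover have "(0, inv v) \<in> hstrip p q" using hU I1[of v] rng[of v] v k by auto
      ultimately show ?thesis by auto
    qed
    have YA: "z \<in> F ` {(r v, v) | v. 0 \<le> v \<and> v \<le> 1}" if "z \<in> hstrip p q \<inter> {p. fst p = 0}" for z
    proof -
      obtain x y where z: "z = (x, y)" by fastforce
      have U: "x = 0" "c \<le> y" "y \<le> e" "0 \<le> h y" "h y \<le> 1" using hU that z by auto
      have eq: "F (r (h y), h y) = (x, y)" using I2 U unfolding F_def r_def by auto
      have mem: "(r (h y), h y) \<in> {(r v, v) | v. 0 \<le> v \<and> v \<le> 1}" using U by blast
      show ?thesis unfolding z by (rule image_eqI[where f=F, OF eq[symmetric] mem])
    qed
    have A: "F ` {(r v, v) | v. 0 \<le> v \<and> v \<le> 1} = hstrip p q \<inter> {p. fst p = 0}"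
      using XA YA by blast
    have XB: "F (s v, v) \<in> hstrip p q \<inter> {p. fst p = 1}" if v: "0 \<le> v" "v \<le> 1" for v
    proof -
      have "F (s v, v) = (1, inv (v + k))" using I1[of "v+k"] rng[of "v+k"] v k unfolding F_def s_def by auto
      moreover have "(1, inv (v + k)) \<in> hstrip p q" using hU I1[of "v+k"] rng[of "v+k"] v k by auto
      ultimately show ?thesis by auto
    qed
    have YB: "z \<in> F ` {(s v, v) | v. 0 \<le> v \<and> v \<le> 1}" if "z \<in> hstrip p q \<inter> {p. fst p = 1}" for z
    proof -
      obtain x y where z: "z = (x, y)" by fastforce
      have U: "x = 1" "c \<le> y" "y \<le> e" "k \<le> h y" "h y \<le> k + 1" using hU that z by auto
      have eq: "F (s (h y - k), h y - k) = (x, y)" using I2 U k unfolding F_def s_def by auto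
      have "0 \<le> h y - k" "h y - k \<le> 1" using U by auto
      then have mem: "(s (h y - k), h y - k) \<in> {(s v, v) | v. 0 \<le> v \<and> v \<le> 1}" by blast
      show ?thesis unfolding z by (rule image_eqI[where f=F, OF eq[symmetric] mem])
    qed
    have B: "F ` {(s v, v) | v. 0 \<le> v \<and> v \<le> 1} = hstrip p q \<inter> {p. fst p = 1}"
      using XB YB by blast
    show ?thesis unfolding vstrip_vbdry_def hstrip_vbdry_def image_Un A B ..
  qed
  moreover have "F ` vstrip_hbdry r s = hstrip_hbdry p q"
  proof -
    have XA: "F z \<in> {(u, p u) | u. 0 \<le> u \<and> u \<le> 1}" if "z \<in> vstrip r s \<inter> {p. snd p = 0}" for z
    proof -
      obtain u v where z: "z = (u, v)" by fastforce
      have V: "v = 0" "c \<le> u" "u \<le> e" "0 \<le> h u" "h u \<le> k" using hV that z by auto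
      have "F (u, v) = (h u / k, p (h u / k))" using V I2 k unfolding F_def p_def by auto
      moreover have "0 \<le> h u / k" "h u / k \<le> 1" using V k by auto
      ultimately show ?thesis using z by blast
    qed
    have YA: "(x, p x) \<in> F ` (vstrip r s \<inter> {p. snd p = 0})" if x: "0 \<le> x" "x \<le> 1" for x
    proof -
      have t1: "0 \<le> k * x" "k * x \<le> k" using x k by (auto simp: mult_left_le)
      have "F (p x, 0) = (x, p x)" using I1[of "k*x"] rng[of "k*x"] t1 k unfolding F_def p_def by auto
      moreover have "(p x, 0) \<in> vstrip r s" using hV I1[of "k*x"] rng[of "k*x"] t1 k unfolding p_def by auto
      ultimately show ?thesis by force
    qed
    have A: "F ` (vstrip r s \<inter> {p. snd p = 0}) = {(u, p u) | u. 0 \<le> u \<and> u \<le> 1}"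
      using XA YA by blast
    have XB: "F z \<in> {(u, q u) | u. 0 \<le> u \<and> u \<le> 1}" if "z \<in> vstrip r s \<inter> {p. snd p = 1}" for z
    proof -
      obtain u v where z: "z = (u, v)" by fastforce
      have V: "v = 1" "c \<le> u" "u \<le> e" "1 \<le> h u" "h u \<le> 1 + k" using hV that z by auto
      have "k * ((h u - 1) / k) + 1 = h u" using k by simp
      then have "F (u, v) = ((h u - 1) / k, q ((h u - 1) / k))" using V I2 k unfolding F_def q_def by auto
      moreover have "0 \<le> (h u - 1) / k" "(h u - 1) / k \<le> 1" using V k by auto
      ultimately show ?thesis using z by blast
    qed
    have YB: "(x, q x) \<in> F ` (vstrip r s \<inter> {p. snd p = 1})" if x: "0 \<le> x" "x \<le> 1" for x
    proof -
      have t1: "0 \<le> k * x" "k * x \<le> k" using x k by (auto simp: mult_left_le)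
      have "F (q x, 1) = (x, q x)" using I1[of "k*x+1"] rng[of "k*x+1"] t1 k unfolding F_def q_def by auto
      moreover have "(q x, 1) \<in> vstrip r s" using hV I1[of "k*x+1"] rng[of "k*x+1"] t1 k unfolding q_def by auto
      ultimately show ?thesis by force
    qed
    have B: "F ` (vstrip r s \<inter> {p. snd p = 1}) = {(u, q u) | u. 0 \<le> u \<and> u \<le> 1}"
      using XB YB by blast
    show ?thesis unfolding vstrip_hbdry_def hstrip_hbdry_def image_Un A B ..
  qed
  ultimately show ?thesis unfolding F_def by blast
qed


lemma incr_from_deriv:
  assumes "Hg g" "0 < a" "a < 1"
    and pos: "\<And>v. c < v \<Longrightarrow> v < e \<Longrightarrow> deriv (\<lambda>w. hfun k g w a d) v > 0"
    and "c \<le> x" "x < y" "y \<le> e"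
  shows "hfun k g x a d < hfun k g y a d"
proof -
  have D: "\<exists>D. DERIV (\<lambda>w. hfun k g w a d) z :> D \<and> D > 0" if "x < z" "z < y" for z
  proof -
    have "c < z" "z < e" using that assms(5-7) by linarith+
    then have "deriv (\<lambda>w. hfun k g w a d) z > 0" by (rule pos)
    then show ?thesis using h_deriv[OF assms(1-3)] by blast
  qed
  have C: "continuous_on {x..y} (\<lambda>w. hfun k g w a d)" by (rule h_cont[OF assms(1-3)])
  show ?thesis using DERIV_pos_imp_increasing_open[of x y "\<lambda>w. hfun k g w a d", OF \<open>x < y\<close> D C] by simp
qed

theorem lemma8p2:
  fixes k a d :: real and g :: "real \<Rightarrow> real \<Rightarrow> real"
  assumes "k > 0" and "0 < a" and "a < 1" and "d > 0"
    and "Hg g" and "Hd k g a d"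
  shows "\<exists>(p :: nat \<Rightarrow> real \<Rightarrow> real) (q :: nat \<Rightarrow> real \<Rightarrow> real)
            (r :: nat \<Rightarrow> real \<Rightarrow> real) (s :: nat \<Rightarrow> real \<Rightarrow> real).
      hstrip (p 0) (q 0) \<inter> hstrip (p 1) (q 1) = {} \<and>
      vstrip (r 0) (s 0) \<inter> vstrip (r 1) (s 1) = {} \<and>
      (\<forall>n\<in>{0, 1}.
         strip_bounds (p n) (q n) \<and> strip_bounds (r n) (s n) \<and>
         hstrip (p n) (q n) \<subseteq> {0..1} \<times> {0..1} \<and>
         vstrip (r n) (s n) \<subseteq> {0..1} \<times> {0..1} \<and>
         phi k a d g ` vstrip (r n) (s n) = hstrip (p n) (q n) \<and>
         phi k a d g ` vstrip_vbdry (r n) (s n) = hstrip_vbdry (p n) (q n) \<and>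
         phi k a d g ` vstrip_hbdry (r n) (s n) = hstrip_hbdry (p n) (q n))"
proof -
  define h where "h = (\<lambda>u. hfun k g u a d)"
  have phiE: "phi k a d g = (\<lambda>(u, v). ((h u - v) / k, u))"
    using assms(1,4) by (auto simp: phi_def h_def hfun_def fun_eq_iff field_simps)
  have ga: "g 0 a = 0" "g 1 a = 0" using assms(2,3,5) unfolding Hg_def by auto
  from assms(6) obtain y0 y1 where y0: "0 < y0" "y0 < a" and y1: "a < y1" "y1 < 1"
    and hy0: "h y0 > k + 1" and hy1: "h y1 < 0"
    and pos: "\<And>v. v \<in> {0<..<y0} \<union> {y1<..<1} \<Longrightarrow> deriv h v > 0"
    unfolding Hd_def h_def by auto
  have cont: "continuous_on S h" for S unfolding h_def by (rule h_cont[OF assms(5,2,3)])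
  have m0: "h x < h y" if "0 \<le> x" "x < y" "y \<le> y0" for x y
    unfolding h_def by (rule incr_from_deriv[OF assms(5,2,3) _ that]) (use pos[unfolded h_def] in auto)
  have m1: "h x < h y" if "y1 \<le> x" "x < y" "y \<le> 1" for x y
    unfolding h_def by (rule incr_from_deriv[OF assms(5,2,3) _ that]) (use pos[unfolded h_def] in auto)
  have h0: "h 0 \<le> 0" using ga unfolding h_def hfun_def by simp
  have h1: "h 1 \<ge> k + 1" using ga unfolding h_def hfun_def by simp
  obtain p0 q0 r0 s0 where B0: "strip_bounds p0 q0" "strip_bounds r0 s0"
     "hstrip p0 q0 \<subseteq> {0..1} \<times> {0..y0}" "vstrip r0 s0 \<subseteq> {0..y0} \<times> {0..1}"
     "(\<lambda>(u, v). ((h u - v) / k, u)) ` vstrip r0 s0 = hstrip p0 q0"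
     "(\<lambda>(u, v). ((h u - v) / k, u)) ` vstrip_vbdry r0 s0 = hstrip_vbdry p0 q0"
     "(\<lambda>(u, v). ((h u - v) / k, u)) ` vstrip_hbdry r0 s0 = hstrip_hbdry p0 q0"
    using branch[of k 0 y0 h, OF assms(1) order_refl y0(1) _ cont m0 h0] y0 assms(3) hy0 by auto
  obtain p1 q1 r1 s1 where B1: "strip_bounds p1 q1" "strip_bounds r1 s1"
     "hstrip p1 q1 \<subseteq> {0..1} \<times> {y1..1}" "vstrip r1 s1 \<subseteq> {y1..1} \<times> {0..1}"
     "(\<lambda>(u, v). ((h u - v) / k, u)) ` vstrip r1 s1 = hstrip p1 q1"
     "(\<lambda>(u, v). ((h u - v) / k, u)) ` vstrip_vbdry r1 s1 = hstrip_vbdry p1 q1"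
     "(\<lambda>(u, v). ((h u - v) / k, u)) ` vstrip_hbdry r1 s1 = hstrip_hbdry p1 q1"
    using branch[of k y1 1 h, OF assms(1) _ y1(2) order_refl cont m1 _ h1] y1 assms(2) hy1 by auto
  define p where "p = (\<lambda>n::nat. if n = 0 then p0 else p1)"
  define q where "q = (\<lambda>n::nat. if n = 0 then q0 else q1)"
  define r where "r = (\<lambda>n::nat. if n = 0 then r0 else r1)"
  define s where "s = (\<lambda>n::nat. if n = 0 then s0 else s1)"
  have lt: "y0 < y1" using y0 y1 by simp
  have s0a: "hstrip p0 q0 \<subseteq> {0..1} \<times> {0..y0}" and s0b: "vstrip r0 s0 \<subseteq> {0..y0} \<times> {0..1}"
    using B0 by blast+
  have s1a: "hstrip p1 q1 \<subseteq> {0..1} \<times> {y1..1}" and s1b: "vstrip r1 s1 \<subseteq> {y1..1} \<times> {0..1}"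
    using B1 by blast+
  have d1: "hstrip p0 q0 \<inter> hstrip p1 q1 = {}"
  proof -
    have "z \<notin> hstrip p1 q1" if "z \<in> hstrip p0 q0" for z
      using s0a s1a that lt by (cases z) fastforce
    then show ?thesis by blast
  qed
  have d2: "vstrip r0 s0 \<inter> vstrip r1 s1 = {}"
  proof -
    have "z \<notin> vstrip r1 s1" if "z \<in> vstrip r0 s0" for z
      using s0b s1b that lt by (cases z) fastforce
    then show ?thesis by blast
  qed
  have sub0: "hstrip p0 q0 \<subseteq> {0..1} \<times> {0..(1::real)}" "vstrip r0 s0 \<subseteq> {0..1} \<times> {0..(1::real)}"
    using y0 assms(3) s0a s0b by fastforce+
  have sub1: "hstrip p1 q1 \<subseteq> {0..1} \<times> {0..(1::real)}" "vstrip r1 s1 \<subseteq> {0..1} \<times> {0..(1::real)}"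
    using y1 assms(2) s1a s1b by fastforce+
  have P0: "strip_bounds p0 q0 \<and> strip_bounds r0 s0 \<and>
         hstrip p0 q0 \<subseteq> {0..1} \<times> {0..1} \<and>
         vstrip r0 s0 \<subseteq> {0..1} \<times> {0..1} \<and>
         phi k a d g ` vstrip r0 s0 = hstrip p0 q0 \<and>
         phi k a d g ` vstrip_vbdry r0 s0 = hstrip_vbdry p0 q0 \<and>
         phi k a d g ` vstrip_hbdry r0 s0 = hstrip_hbdry p0 q0"
    unfolding phiE using B0 sub0 by blast
  have P1: "strip_bounds p1 q1 \<and> strip_bounds r1 s1 \<and>
         hstrip p1 q1 \<subseteq> {0..1} \<times> {0..1} \<and>
         vstrip r1 s1 \<subseteq> {0..1} \<times> {0..1} \<and>
         phi k a d g ` vstrip r1 s1 = hstrip p1 q1 \<and>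
         phi k a d g ` vstrip_vbdry r1 s1 = hstrip_vbdry p1 q1 \<and>
         phi k a d g ` vstrip_hbdry r1 s1 = hstrip_hbdry p1 q1"
    unfolding phiE using B1 sub1 by blast
  show ?thesis
  proof (intro exI conjI)
    show "hstrip (p 0) (q 0) \<inter> hstrip (p 1) (q 1) = {}" unfolding p_def q_def using d1 by simp
    show "vstrip (r 0) (s 0) \<inter> vstrip (r 1) (s 1) = {}" unfolding r_def s_def using d2 by simp
    show "\<forall>n\<in>{0, 1}.
         strip_bounds (p n) (q n) \<and> strip_bounds (r n) (s n) \<and>
         hstrip (p n) (q n) \<subseteq> {0..1} \<times> {0..1} \<and>
         vstrip (r n) (s n) \<subseteq> {0..1} \<times> {0..1} \<and>
         phi k a d g ` vstrip (r n) (s n) = hstrip (p n) (q n) \<and>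
         phi k a d g ` vstrip_vbdry (r n) (s n) = hstrip_vbdry (p n) (q n) \<and>
         phi k a d g ` vstrip_hbdry (r n) (s n) = hstrip_hbdry (p n) (q n)"
    proof
      fix n :: nat assume "n \<in> {0, 1}"
      then consider "n = 0" | "n = 1" by blast
      then show "strip_bounds (p n) (q n) \<and> strip_bounds (r n) (s n) \<and>
         hstrip (p n) (q n) \<subseteq> {0..1} \<times> {0..1} \<and>
         vstrip (r n) (s n) \<subseteq> {0..1} \<times> {0..1} \<and>
         phi k a d g ` vstrip (r n) (s n) = hstrip (p n) (q n) \<and>
         phi k a d g ` vstrip_vbdry (r n) (s n) = hstrip_vbdry (p n) (q n) \<and>
         phi k a d g ` vstrip_hbdry (r n) (s n) = hstrip_hbdry (p n) (q n)"
        by cases (simp_all only: p_def q_def r_def s_def if_True if_False one_neq_zero P0 P1 refl)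
    qed
  qed
qed

end
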